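(* Let $\alpha>0$ and $0<\beta\le\frac14$, and consider the model $Y_i=f(x_i)+V^{1/2}(x_i)\xi_i$, $i=0,\dots,n$, $x_i=i/n$, with $\xi_0,\dots,\xi_n\overset{iid}{\sim}N(0,1)$. For every $\eta\in(0,1)$ there exists $c_\eta>0$ not depending on $n$ such that for all $0<c<c_\eta$, $$\inf_\varphi\left\{\sup_{f\in\mathcal{H}_\alpha,\,V\in\mathcal{V}_0}P_{f,V}\{\varphi=1\}+\sup_{f\in\mathcal{H}_\alpha,\,V\in\mathcal{V}_{1,\beta}(cn^{-\beta})}P_{f,V}\{\varphi=0\}\right\}\ge1-\eta,$$ where the infimum is over all tests $\varphi$, i.e. measurable functions of $(Y_0,\dots,Y_n)$ into $\{0,1\}$.
   Context: $\mathcal{H}_\alpha=\mathcal{H}_\alpha(M)$: functions $g:[0,1]\to\mathbb{R}$ with $|g^{(\lfloor\alpha\rfloor)}(x)-g^{(\lfloor\alpha\rfloor)}(y)|\le M|x-y|^{\alpha-\lfloor\alpha\rfloor}$ for all $x,y\in[0,1]$ and $\|g^{(k)}\|_\infty\le M$ for $k=0,\dots,\lfloor\alpha\rfloor$; $M$ is a fixed sufficiently large constant. $\mathcal{V}_0=\{V:[0,1]\to[0,\infty):V\equiv\sigma^2,\ 0\le\sigma^2\le M\}$; $\mathcal{V}_{1,\beta}(\varepsilon)=\{V\in\mathcal{H}_\beta:V\ge0,\ \|V-\bar V\mathbf 1\|_2\ge\varepsilon\}$ with $\bar V=\int_0^1V$, $\mathbf1\equiv1$, $\|\cdot\|_2$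 the $L^2([0,1])$ norm. $P_{f,V}$ is the law of the data. *)

theory Defs
  imports "HOL-Probability.Probability"
begin

definition holder_class :: "real \<Rightarrow> real \<Rightarrow> (real \<Rightarrow> real) set" where
  "holder_class \<alpha> M = {g. \<exists>D :: nat \<Rightarrow> real \<Rightarrow> real.
     (\<forall>x\<in>{0..1}. D 0 x = g x) \<and>
     (\<forall>k. k < nat \<lfloor>\<alpha>\<rfloor> \<longrightarrow> (\<forall>x\<in>{0..1}. (D k has_real_derivative D (Suc k) x) (at x within {0..1}))) \<and>
     (\<forall>k. k \<le> nat \<lfloor>\<alpha>\<rfloor> \<longrightarrow> (\<forall>x\<in>{0..1}. \<bar>D k x\<bar> \<le> M)) \<and>
     (\<forall>x\<in>{0..1}. \<forall>y\<in>{0..1}.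
        \<bar>D (nat \<lfloor>\<alpha>\<rfloor>) x - D (nat \<lfloor>\<alpha>\<rfloor>) y\<bar> \<le> M * \<bar>x - y\<bar> powr (\<alpha> - of_int \<lfloor>\<alpha>\<rfloor>))}"

definition V0_class :: "real \<Rightarrow> (real \<Rightarrow> real) set" where
  "V0_class M = {V. \<exists>\<sigma>2. 0 \<le> \<sigma>2 \<and> \<sigma>2 \<le> M \<and> V = (\<lambda>_. \<sigma>2)}"

definition mean01 :: "(real \<Rightarrow> real) \<Rightarrow> real" where
  "mean01 V = integral {0..1} V"

definition L2dev01 :: "(real \<Rightarrow> real) \<Rightarrow> real" where
  "L2dev01 V = sqrt (integral {0..1} (\<lambda>x. (V x - mean01 V)\<^sup>2))"

definition V1_class :: "real \<Rightarrow> real \<Rightarrow> real \<Rightarrow> (real \<Rightarrow> real) set" where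
  "V1_class \<beta> M \<epsilon> = {V. V \<in> holder_class \<beta> M \<and> (\<forall>x\<in>{0..1}. 0 \<le> V x) \<and> L2dev01 V \<ge> \<epsilon>}"

definition sample_space :: "nat \<Rightarrow> (nat \<Rightarrow> real) measure" where
  "sample_space n = PiM {0..n} (\<lambda>_. borel)"

definition noise :: "nat \<Rightarrow> (nat \<Rightarrow> real) measure" where
  "noise n = PiM {0..n} (\<lambda>_. density lborel std_normal_density)"

definition law :: "nat \<Rightarrow> (real \<Rightarrow> real) \<Rightarrow> (real \<Rightarrow> real) \<Rightarrow> (nat \<Rightarrow> real) measure" where
  "law n f V = distr (noise n) (sample_space n)
     (\<lambda>\<xi>. \<lambda>i\<in>{0..n}. f (real i / real n) + sqrt (V (real i / real n)) * \<xi> i)"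

text \<open>Tests: measurable maps of the data into {0,1} (True = reject = 1).\<close>
definition tests :: "nat \<Rightarrow> ((nat \<Rightarrow> real) \<Rightarrow> bool) set" where
  "tests n = measurable (sample_space n) (count_space UNIV)"

definition test_risk :: "nat \<Rightarrow> real \<Rightarrow> real \<Rightarrow> real \<Rightarrow> real \<Rightarrow> ((nat \<Rightarrow> real) \<Rightarrow> bool) \<Rightarrow> real" where
  "test_risk n \<alpha> \<beta> M \<epsilon> \<phi> =
     (SUP fV \<in> holder_class \<alpha> M \<times> V0_class M.
        measure (law n (fst fV) (snd fV)) {y \<in> space (sample_space n). \<phi> y})
   + (SUP fV \<in> holder_class \<alpha> M \<times> V1_class \<beta> M \<epsilon>.
        measure (law n (fst fV) (snd fV)) {y \<in> space (sample_space n). \<not> \<phi> y})"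

end

theory Submission
  imports Defs
begin

lemma law_prob: "prob_space (law n f V)"
proof -
  have "prob_space (noise n)"
    unfolding noise_def by (auto intro!: prob_space_PiM prob_space_normal_density)
  moreover have "(\<lambda>\<xi>. \<lambda>i\<in>{0..n}. f (real i / real n) + sqrt (V (real i / real n)) * \<xi> i)
      \<in> measurable (noise n) (sample_space n)"
    unfolding noise_def sample_space_def by measurable
  ultimately show ?thesis unfolding law_def using prob_space.prob_space_distr by blast
qed

lemma minpow: fixes t b :: real assumes "0 \<le> t" "0 < b" "b \<le> 1"
  shows "min 2 t \<le> 2 * t powr b"
proof (cases "t \<le> 1")
  case True
  then have "t powr 1 \<le> t powr b" using assms
    using powr_mono'[of b 1 t] by auto
  then show ?thesis using assms True by auto
next
  case False
  then have "1 \<le> t powr b" using assms by (simp add: ge_one_powr_ge_zero)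
  then show ?thesis by linarith
qed

lemma cos_lip: fixes u v :: real shows "\<bar>cos u - cos v\<bar> \<le> \<bar>u - v\<bar>"
proof -
  have "\<bar>cos u - cos v\<bar> = 2 * \<bar>sin ((u + v) / 2)\<bar> * \<bar>sin ((u - v) / 2)\<bar>"
  proof -
    have e: "(v-u)/2 = -((u-v)/2)" by (simp add: field_simps)
    have h: "\<bar>sin((v-u)/2)\<bar> = \<bar>sin((u-v)/2)\<bar>" by (simp only: e sin_minus abs_minus_cancel)
    show ?thesis by (simp add: cos_diff_cos abs_mult h)
  qed
  also have "\<dots> \<le> 2 * 1 * \<bar>(u - v) / 2\<bar>"
    by (intro mult_mono abs_sin_x_le_abs_x) auto
  finally show ?thesis by simp
qed

lemma cos_holder:
  fixes a k b x y :: real assumes "0 \<le> a" "0 \<le> k" "0 < b" "b \<le> 1"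
  shows "\<bar>(1 + a/2 - a/2 * cos (k*x)) - (1 + a/2 - a/2 * cos (k*y))\<bar>
     \<le> a * k powr b * \<bar>x - y\<bar> powr b"
proof -
  have "\<bar>(1 + a/2 - a/2 * cos (k*x)) - (1 + a/2 - a/2 * cos (k*y))\<bar>
      = a/2 * \<bar>cos (k*x) - cos (k*y)\<bar>"
  proof -
    have "(1 + a/2 - a/2 * cos (k*x)) - (1 + a/2 - a/2 * cos (k*y)) = a/2 * (cos (k*y) - cos (k*x))"
      by (simp add: algebra_simps)
    moreover have "\<bar>a/2 * (cos (k*y) - cos (k*x))\<bar> = a/2 * \<bar>cos (k*x) - cos (k*y)\<bar>"
    proof -
      have "\<bar>a/2\<bar> = a/2" using assms by simp
      then show ?thesis by (metis abs_mult abs_minus_commute)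
    qed
    ultimately show ?thesis by (simp only:)
  qed
  also have "\<bar>cos (k*x) - cos (k*y)\<bar> \<le> min 2 (k * \<bar>x - y\<bar>)"
  proof -
    have "\<bar>cos (k*x) - cos (k*y)\<bar> \<le> \<bar>k*x - k*y\<bar>" by (rule cos_lip)
    moreover have "\<bar>k*x - k*y\<bar> = k * \<bar>x - y\<bar>" using assms
      by (simp add: abs_mult right_diff_distrib[symmetric])
    moreover have "\<bar>cos (k*x) - cos (k*y)\<bar> \<le> 2"
      using abs_cos_le_one[of "k*x"] abs_cos_le_one[of "k*y"] by linarith
    ultimately show ?thesis by (simp only:)
  qed
  also have "min 2 (k * \<bar>x - y\<bar>) \<le> 2 * (k * \<bar>x - y\<bar>) powr b"
    using assms by (intro minpow) auto
  finally have "\<bar>(1 + a/2 - a/2 * cos (k*x)) - (1 + a/2 - a/2 * cos (k*y))\<bar>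
     \<le> a/2 * (2 * (k * \<bar>x - y\<bar>) powr b)" using assms by (simp add: mult_left_mono)
  also have "\<dots> = a * k powr b * \<bar>x - y\<bar> powr b" using assms by (simp add: powr_mult)
  finally show ?thesis .
qed

lemma int_cos: fixes m :: nat assumes "m \<ge> 1"
  shows "((\<lambda>x. cos (2*pi*m*x)) has_integral 0) {0..1}"
proof -
  define k where "k = 2*pi*m"
  have k: "k > 0" using assms by (simp add: k_def)
  have d: "((\<lambda>x. sin (k*x)/k) has_vector_derivative cos (k*x)) (at x within {0..1})" for x
    using k by (auto intro!: derivative_eq_intros simp: has_real_derivative_iff_has_vector_derivative[symmetric])
  have "((\<lambda>x. cos (k*x)) has_integral (sin (k*1)/k - sin (k*0)/k)) {0..1}"
    by (rule fundamental_theorem_of_calculus) (auto intro: d)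
  moreover have "sin (k*1) = 0" unfolding k_def using sin_npi[of "2*m"] by (simp add: mult.commute mult.left_commute)
  ultimately show ?thesis by (simp add: k_def)
qed

lemma V_integrals: fixes n :: nat and a :: real assumes "n \<ge> 1" "a \<ge> 0"
  defines "V \<equiv> \<lambda>x. 1 + a/2 - a/2 * cos (2*pi*n*x)"
  shows "L2dev01 V = a / (2 * sqrt 2)"
proof -
  have i1: "(V has_integral (1 + a/2) - a/2 * 0) {0..1}"
    unfolding V_def
    by (intro has_integral_diff has_integral_mult_right int_cos assms)
       (use has_integral_const_real[of "1 + a/2" 0 1] in simp)
  then have m: "mean01 V = 1 + a/2" unfolding mean01_def by (simp add: integral_unique)
  have eq: "(V x - mean01 V)\<^sup>2 = a\<^sup>2/8 + a\<^sup>2/8 * cos (2*pi*real (2*n)*x)" for x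
  proof -
    have h1: "cos (2*pi*real (2*n)*x) = 2 * (cos (2*pi*n*x))\<^sup>2 - 1"
      using cos_double_cos[of "2*pi*n*x"] by (simp add: mult.commute mult.left_commute)
    have h2: "V x - mean01 V = - (a/2 * cos (2*pi*n*x))" by (simp only: m) (simp add: V_def)
    show ?thesis unfolding h1 h2 by (simp add: power2_eq_square algebra_simps)
  qed
  have i2: "((\<lambda>x. a\<^sup>2/8 + a\<^sup>2/8 * cos (2*pi*real (2*n)*x)) has_integral (a\<^sup>2/8 + a\<^sup>2/8 * 0)) {0..1}"
    by (intro has_integral_add has_integral_mult_right int_cos)
       (use assms has_integral_const_real[of "a\<^sup>2/8" 0 1] in auto)
  have "integral {0..1} (\<lambda>x. (V x - mean01 V)\<^sup>2) = a\<^sup>2/8"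
    unfolding eq using i2 by (simp add: integral_unique)
  then have "L2dev01 V = sqrt (a\<^sup>2/8)" unfolding L2dev01_def by simp
  also have "\<dots> = a / (2 * sqrt 2)"
  proof -
    have "sqrt (a\<^sup>2/8) = sqrt (a\<^sup>2) / sqrt 8" by (simp add: real_sqrt_divide)
    moreover have "sqrt (8::real) = 2 * sqrt 2"
      using real_sqrt_mult[of 4 2] by simp
    ultimately show ?thesis using assms by simp
  qed
  finally show ?thesis .
qed

lemma zero_holder: "M \<ge> 0 \<Longrightarrow> (\<lambda>_. 0) \<in> holder_class \<alpha> M"
  unfolding holder_class_def by (rule CollectI, rule exI[of _ "\<lambda>_ _. 0"]) auto

theorem proposition3p3:
  fixes \<alpha> \<beta> :: real
  assumes "\<alpha> > 0" and "0 < \<beta>" and "\<beta> \<le> 1/4"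
  shows "\<exists>M0. \<forall>M \<ge> M0. \<forall>\<eta>. 0 < \<eta> \<and> \<eta> < 1 \<longrightarrow>
           (\<exists>c\<eta> > 0. \<forall>c. 0 < c \<and> c < c\<eta> \<longrightarrow>
              (\<forall>n::nat. n \<ge> 1 \<longrightarrow>
                 (INF \<phi> \<in> tests n. test_risk n \<alpha> \<beta> M (c * real n powr (- \<beta>)) \<phi>) \<ge> 1 - \<eta>))"
proof -
  have main: "1 - \<eta> \<le> (INF \<phi> \<in> tests n. test_risk n \<alpha> \<beta> M (c * real n powr (- \<beta>)) \<phi>)"
    if M: "M \<ge> 8" and eta: "0 < \<eta>" and c: "0 < c \<and> c < 1/3" and n: "n \<ge> 1"
    for M \<eta> c :: real and n :: nat
  proof -
  define a where "a = real n powr (- \<beta>)"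
  define k where "k = 2*pi*real n"
  define V where "V = (\<lambda>x. 1 + a/2 - a/2 * cos (k*x))"
  have a0: "a > 0" using n by (simp add: a_def)
  have a1: "a \<le> 1" unfolding a_def using n assms
    by (simp add: powr_minus_divide ge_one_powr_ge_zero)
  have k0: "k > 0" using n by (simp add: k_def)
  have f0: "(\<lambda>_. 0) \<in> holder_class \<alpha> M" using M by (intro zero_holder) simp
  have v0: "(\<lambda>_. 1) \<in> V0_class M" unfolding V0_class_def using M by (intro CollectI exI[of _ 1]) auto
  have fl: "nat \<lfloor>\<beta>\<rfloor> = 0" "of_int \<lfloor>\<beta>\<rfloor> = (0::real)" using assms by (simp_all add: floor_eq_iff)
  have hol: "\<bar>V x - V y\<bar> \<le> M * \<bar>x - y\<bar> powr \<beta>" for x y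
  proof -
    have "\<bar>V x - V y\<bar> \<le> a * k powr \<beta> * \<bar>x - y\<bar> powr \<beta>"
      unfolding V_def using a0 k0 assms by (intro cos_holder) auto
    also have "a * k powr \<beta> = (2*pi) powr \<beta>"
      unfolding a_def k_def using n
      by (simp add: powr_mult powr_minus field_simps)
    also have "(2*pi) powr \<beta> \<le> (2*pi) powr 1"
      using assms pi_gt3 by (intro powr_mono) auto
    also have "\<dots> \<le> M" using M pi_less_4 by simp
    finally show ?thesis by (simp add: mult_right_mono)
  qed
  have vb: "0 \<le> V x \<and> \<bar>V x\<bar> \<le> M" for x
  proof -
    have "\<bar>cos (k*x)\<bar> \<le> 1" by simp
    then have "-1 \<le> cos (k*x) \<and> cos (k*x) \<le> 1" by linarith
    then have cb: "-1 \<le> cos (k*x)" "cos (k*x) \<le> 1" by auto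
    have "a * cos (k*x) \<le> a * 1" using a0 cb by (intro mult_left_mono) auto
    moreover have "a * (-1) \<le> a * cos (k*x)" using a0 cb by (intro mult_left_mono) auto
    moreover have "V x = 1 + a/2 - (a * cos (k*x))/2" by (simp add: V_def)
    ultimately have "0 \<le> V x \<and> V x \<le> 2" using a0 a1 by linarith
    then show ?thesis using M by auto
  qed
  have L2: "L2dev01 V = a / (2 * sqrt 2)"
    unfolding V_def k_def using V_integrals[of n a] n a0 by simp
  have "c * a \<le> a / (2 * sqrt 2)"
  proof -
    have "sqrt 2 \<le> 3/2" by (rule real_le_lsqrt) (auto simp: power2_eq_square)
    then have "c * (2 * sqrt 2) \<le> c * 3" using c by (intro mult_left_mono) auto
    then have "c * (2 * sqrt 2) \<le> 1" using c by linarith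
    then show ?thesis using a0 by (simp add: field_simps)
  qed
  then have v1: "V \<in> V1_class \<beta> M (c * real n powr (- \<beta>))"
    unfolding V1_class_def holder_class_def
    using hol vb L2 fl by (auto simp: a_def intro!: exI[of _ "\<lambda>_. V"])
  have grid: "V (real i / real n) = 1" for i :: nat
  proof -
    have "k * (real i / real n) = real (2*i) * pi" unfolding k_def using n by simp
    then show ?thesis unfolding V_def by (simp add: cos_npi_int)
  qed
  have lawEq: "law n (\<lambda>_. 0) V = law n (\<lambda>_. 0) (\<lambda>_. 1)"
    unfolding law_def grid by simp
  define P where "P = law n (\<lambda>_. 0) (\<lambda>_. 1::real)"
  interpret P: prob_space P unfolding P_def by (rule law_prob)
  have sp: "space P = space (sample_space n)" "sets P = sets (sample_space n)"
    unfolding P_def law_def by simp_all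
  have bdd: "bdd_above ((\<lambda>fV. measure (law n (fst fV) (snd fV)) (S fV)) ` A)" for S A
    by (rule bdd_aboveI[of _ 1]) (auto intro: prob_space.prob_le_1[OF law_prob])
  have "(\<lambda>_. True) \<in> tests n" unfolding tests_def by (rule measurable_const) simp
  then have tn: "tests n \<noteq> {}" by blast
  show "1 - \<eta> \<le> (INF \<phi> \<in> tests n. test_risk n \<alpha> \<beta> M (c * real n powr (- \<beta>)) \<phi>)"
  proof (rule cINF_greatest[OF tn])
    fix \<phi> assume ph: "\<phi> \<in> tests n"
    let ?A = "{y \<in> space (sample_space n). \<phi> y}"
    have Ae: "?A \<in> P.events"
    proof -
      have "\<phi> -` {True} \<inter> space (sample_space n) \<in> sets (sample_space n)"
        using ph unfolding tests_def by (rule measurable_sets) simp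
      moreover have "\<phi> -` {True} \<inter> space (sample_space n) = ?A" by auto
      ultimately show ?thesis using sp by simp
    qed
    have compl: "{y \<in> space (sample_space n). \<not> \<phi> y} = space P - ?A" using sp by auto
    have "measure P ?A \<le> (SUP fV \<in> holder_class \<alpha> M \<times> V0_class M.
        measure (law n (fst fV) (snd fV)) {y \<in> space (sample_space n). \<phi> y})"
      unfolding P_def using f0 v0 by (intro cSUP_upper2[OF bdd, of "((\<lambda>_. 0), (\<lambda>_. 1))"]) auto
    moreover have "measure P {y \<in> space (sample_space n). \<not> \<phi> y} \<le> (SUP fV \<in> holder_class \<alpha> M \<times> V1_class \<beta> M (c * real n powr (- \<beta>)).
        measure (law n (fst fV) (snd fV)) {y \<in> space (sample_space n). \<not> \<phi> y})"
      unfolding P_def lawEq[symmetric] using f0 v1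
      by (intro cSUP_upper2[OF bdd, of "((\<lambda>_. 0), V)"]) auto
    moreover have "measure P {y \<in> space (sample_space n). \<not> \<phi> y} = 1 - measure P ?A"
      unfolding compl using Ae by (rule P.prob_compl)
    ultimately have "1 \<le> test_risk n \<alpha> \<beta> M (c * real n powr (- \<beta>)) \<phi>"
      unfolding test_risk_def by linarith
    then show "1 - \<eta> \<le> test_risk n \<alpha> \<beta> M (c * real n powr (- \<beta>)) \<phi>" using eta by linarith
  qed
  qed
  show ?thesis
    by (rule exI[of _ 8], intro allI impI, rule exI[of _ "1/3"]) (auto intro!: main)
qed

end
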